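(* The absolute random order ratio of Best Fit satisfies $RR_{\mathrm{BF}} \ge 1.30$.
   Context: Bin packing: given a list $I=(x_1,\ldots,x_n)$ of items with sizes in $(0,1]$, a packing assigns items to unit-capacity bins so that the total size of items in each bin is at most $1$. $\mathrm{OPT}(I)$ denotes the minimum number of bins in a feasible packing. The online algorithm Best Fit (BF) processes the items in the given order and packs the current item into the fullest bin (largest current load) into which it fits, opening a new bin if it fits into no existing bin; items are never moved. $\mathrm{BF}(I)$ denotes the number of bins Best Fit uses on list $I$. For $\sigma\in\mathcal{S}_n$ (permutations of $[n]$), $I^\sigma=(x_{\sigma(1)},\ldots,x_{\sigma(n)})$. With $\mathcal{I}$ the set of all finite item lists and $\sigma$ uniformly random in $\mathcal{S}_n$, the absolute random order ratio is $$RR_{\mathrm{BF}}=\sup_{I\in\mathcal{I}}\frac{\mathbb{E}[\mathrm{BF}(I^\sigma)]}{\mathrm{OPT}(I)}.$$ *)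

theory Defs
  imports "HOL-Combinatorics.Permutations" "HOL-Library.Extended_Real"
begin

text \<open>Bin states are represented by the list of current bin loads (in opening order).\<close>

definition bf_step :: "real list \<Rightarrow> real \<Rightarrow> real list" where
  "bf_step loads x =
     (let fit = filter (\<lambda>i. loads ! i + x \<le> 1) [0..<length loads] in
      if fit = [] then loads @ [x]
      else (let m = Max ((\<lambda>i. loads ! i) ` set fit);
                j = hd (filter (\<lambda>i. loads ! i = m) fit)
            in loads[j := loads ! j + x]))"

definition bf_loads :: "real list \<Rightarrow> real list" where
  "bf_loads xs = foldl bf_step [] xs"

definition BF :: "real list \<Rightarrow> nat" where
  "BF xs = length (bf_loads xs)"

definition feasible_packing :: "real list \<Rightarrow> nat \<Rightarrow> (nat \<Rightarrow> nat) \<Rightarrow> bool" where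
  "feasible_packing xs k f \<longleftrightarrow>
     (\<forall>i<length xs. f i < k) \<and>
     (\<forall>b<k. (\<Sum>i\<in>{i. i < length xs \<and> f i = b}. xs ! i) \<le> 1)"

definition OPT :: "real list \<Rightarrow> nat" where
  "OPT xs = (LEAST k. \<exists>f. feasible_packing xs k f)"

definition permute_list_by :: "(nat \<Rightarrow> nat) \<Rightarrow> real list \<Rightarrow> real list" where
  "permute_list_by \<sigma> xs = map (\<lambda>i. xs ! \<sigma> i) [0..<length xs]"

definition expected_BF :: "real list \<Rightarrow> real" where
  "expected_BF xs =
     (\<Sum>\<sigma>\<in>{\<sigma>. \<sigma> permutes {..<length xs}}. real (BF (permute_list_by \<sigma> xs)))
       / fact (length xs)"

definition valid_instance :: "real list \<Rightarrow> bool" where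
  "valid_instance xs \<longleftrightarrow> xs \<noteq> [] \<and> (\<forall>x\<in>set xs. 0 < x \<and> x \<le> 1)"

definition RR_BF :: ereal where
  "RR_BF = (SUP xs\<in>{xs. valid_instance xs}. ereal (expected_BF xs / real (OPT xs)))"

end

theory Submission
  imports Defs
begin

definition inst :: "real list" where
  "inst = [1/6, 1/6, 1/4, 2/3, 3/4]"

definition g :: "nat list \<Rightarrow> real" where
  "g ys = real (BF (map (\<lambda>i. inst ! i) ys))"

lemma g_table:
  "g [0, 1, 2, 3, 4] = 3"
  "g [0, 1, 2, 4, 3] = 3"
  "g [0, 1, 3, 2, 4] = 2"
  "g [0, 1, 3, 4, 2] = 2"
  "g [0, 1, 4, 2, 3] = 2"
  "g [0, 1, 4, 3, 2] = 2"
  "g [0, 2, 1, 3, 4] = 3"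
  "g [0, 2, 1, 4, 3] = 3"
  "g [0, 2, 3, 1, 4] = 3"
  "g [0, 2, 3, 4, 1] = 3"
  "g [0, 2, 4, 1, 3] = 3"
  "g [0, 2, 4, 3, 1] = 3"
  "g [0, 3, 1, 2, 4] = 2"
  "g [0, 3, 1, 4, 2] = 2"
  "g [0, 3, 2, 1, 4] = 2"
  "g [0, 3, 2, 4, 1] = 2"
  "g [0, 3, 4, 1, 2] = 2"
  "g [0, 3, 4, 2, 1] = 2"
  "g [0, 4, 1, 2, 3] = 3"
  "g [0, 4, 1, 3, 2] = 3"
  "g [0, 4, 2, 1, 3] = 3"
  "g [0, 4, 2, 3, 1] = 3"
  "g [0, 4, 3, 1, 2] = 3"
  "g [0, 4, 3, 2, 1] = 3"
  "g [1, 0, 2, 3, 4] = 3"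
  "g [1, 0, 2, 4, 3] = 3"
  "g [1, 0, 3, 2, 4] = 2"
  "g [1, 0, 3, 4, 2] = 2"
  "g [1, 0, 4, 2, 3] = 2"
  "g [1, 0, 4, 3, 2] = 2"
  "g [1, 2, 0, 3, 4] = 3"
  "g [1, 2, 0, 4, 3] = 3"
  "g [1, 2, 3, 0, 4] = 3"
  "g [1, 2, 3, 4, 0] = 3"
  "g [1, 2, 4, 0, 3] = 3"
  "g [1, 2, 4, 3, 0] = 3"
  "g [1, 3, 0, 2, 4] = 2"
  "g [1, 3, 0, 4, 2] = 2"
  "g [1, 3, 2, 0, 4] = 2"
  "g [1, 3, 2, 4, 0] = 2"
  "g [1, 3, 4, 0, 2] = 2"
  "g [1, 3, 4, 2, 0] = 2"
  "g [1, 4, 0, 2, 3] = 3"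
  "g [1, 4, 0, 3, 2] = 3"
  "g [1, 4, 2, 0, 3] = 3"
  "g [1, 4, 2, 3, 0] = 3"
  "g [1, 4, 3, 0, 2] = 3"
  "g [1, 4, 3, 2, 0] = 3"
  "g [2, 0, 1, 3, 4] = 3"
  "g [2, 0, 1, 4, 3] = 3"
  "g [2, 0, 3, 1, 4] = 3"
  "g [2, 0, 3, 4, 1] = 3"
  "g [2, 0, 4, 1, 3] = 3"
  "g [2, 0, 4, 3, 1] = 3"
  "g [2, 1, 0, 3, 4] = 3"
  "g [2, 1, 0, 4, 3] = 3"
  "g [2, 1, 3, 0, 4] = 3"
  "g [2, 1, 3, 4, 0] = 3"
  "g [2, 1, 4, 0, 3] = 3"
  "g [2, 1, 4, 3, 0] = 3"
  "g [2, 3, 0, 1, 4] = 3"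
  "g [2, 3, 0, 4, 1] = 3"
  "g [2, 3, 1, 0, 4] = 3"
  "g [2, 3, 1, 4, 0] = 3"
  "g [2, 3, 4, 0, 1] = 3"
  "g [2, 3, 4, 1, 0] = 3"
  "g [2, 4, 0, 1, 3] = 2"
  "g [2, 4, 0, 3, 1] = 2"
  "g [2, 4, 1, 0, 3] = 2"
  "g [2, 4, 1, 3, 0] = 2"
  "g [2, 4, 3, 0, 1] = 2"
  "g [2, 4, 3, 1, 0] = 2"
  "g [3, 0, 1, 2, 4] = 2"
  "g [3, 0, 1, 4, 2] = 2"
  "g [3, 0, 2, 1, 4] = 2"
  "g [3, 0, 2, 4, 1] = 2"
  "g [3, 0, 4, 1, 2] = 2"
  "g [3, 0, 4, 2, 1] = 2"
  "g [3, 1, 0, 2, 4] = 2"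
  "g [3, 1, 0, 4, 2] = 2"
  "g [3, 1, 2, 0, 4] = 2"
  "g [3, 1, 2, 4, 0] = 2"
  "g [3, 1, 4, 0, 2] = 2"
  "g [3, 1, 4, 2, 0] = 2"
  "g [3, 2, 0, 1, 4] = 3"
  "g [3, 2, 0, 4, 1] = 3"
  "g [3, 2, 1, 0, 4] = 3"
  "g [3, 2, 1, 4, 0] = 3"
  "g [3, 2, 4, 0, 1] = 3"
  "g [3, 2, 4, 1, 0] = 3"
  "g [3, 4, 0, 1, 2] = 3"
  "g [3, 4, 0, 2, 1] = 3"
  "g [3, 4, 1, 0, 2] = 3"
  "g [3, 4, 1, 2, 0] = 3"
  "g [3, 4, 2, 0, 1] = 2"
  "g [3, 4, 2, 1, 0] = 2"
  "g [4, 0, 1, 2, 3] = 3"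
  "g [4, 0, 1, 3, 2] = 3"
  "g [4, 0, 2, 1, 3] = 3"
  "g [4, 0, 2, 3, 1] = 3"
  "g [4, 0, 3, 1, 2] = 3"
  "g [4, 0, 3, 2, 1] = 3"
  "g [4, 1, 0, 2, 3] = 3"
  "g [4, 1, 0, 3, 2] = 3"
  "g [4, 1, 2, 0, 3] = 3"
  "g [4, 1, 2, 3, 0] = 3"
  "g [4, 1, 3, 0, 2] = 3"
  "g [4, 1, 3, 2, 0] = 3"
  "g [4, 2, 0, 1, 3] = 2"
  "g [4, 2, 0, 3, 1] = 2"
  "g [4, 2, 1, 0, 3] = 2"
  "g [4, 2, 1, 3, 0] = 2"
  "g [4, 2, 3, 0, 1] = 2"
  "g [4, 2, 3, 1, 0] = 2"
  "g [4, 3, 0, 1, 2] = 3"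
  "g [4, 3, 0, 2, 1] = 3"
  "g [4, 3, 1, 0, 2] = 3"
  "g [4, 3, 1, 2, 0] = 3"
  "g [4, 3, 2, 0, 1] = 2"
  "g [4, 3, 2, 1, 0] = 2"
  by (simp_all add: g_def inst_def BF_def bf_loads_def bf_step_def)

lemma sum_expand:
  "(\<Sum>\<sigma>\<in>{\<sigma>. \<sigma> permutes insert 0 (insert 1 (insert 2 (insert 3 (insert (4::nat) {}))))}.
      g (map \<sigma> [0,1,2,3,4])) = 312"
  apply (simp add: sum_over_permutations_insert transpose_def del: One_nat_def)
  apply (simp only: g_table)
  done

lemma sum_perm5:
  "(\<Sum>\<sigma>\<in>{\<sigma>. \<sigma> permutes {..<length inst}}. real (BF (permute_list_by \<sigma> inst))) = 312"
proof -
  have e: "{..<length inst} = insert 0 (insert 1 (insert 2 (insert 3 (insert (4::nat) {}))))"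
    by (auto simp: inst_def)
  have u: "[0..<length inst] = [0,1,2,3,4]" by (simp add: inst_def upt_rec)
  have p: "real (BF (permute_list_by \<sigma> inst)) = g (map \<sigma> [0,1,2,3,4])" for \<sigma>
    unfolding permute_list_by_def u g_def by simp
  show ?thesis
    unfolding p e by (rule sum_expand)
qed

lemma ex_feas: "\<exists>f. feasible_packing inst 2 f"
proof -
  define f :: "nat \<Rightarrow> nat" where "f = (\<lambda>i. if i \<in> {0,1,3} then 0 else 1)"
  have "feasible_packing inst 2 f"
  proof -
    have a: "{i. i < length inst \<and> f i = 0} = {0,1,3}" by (auto simp: f_def inst_def)
    have b: "{i. i < length inst \<and> f i = 1} = {2,4}" by (auto simp: f_def inst_def)
    have "\<forall>b<2. (\<Sum>i\<in>{i. i < length inst \<and> f i = b}. inst ! i) \<le> 1"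
    proof (intro allI impI)
      fix b :: nat assume "b < 2"
      then have "b = 0 \<or> b = 1" by auto
      then show "(\<Sum>i\<in>{i. i < length inst \<and> f i = b}. inst ! i) \<le> 1"
        by (auto simp only: a b) (simp_all add: inst_def)
    qed
    then show ?thesis by (auto simp: feasible_packing_def f_def)
  qed
  then show ?thesis by blast
qed

lemma opt_inst: "OPT inst \<le> 2"
  unfolding OPT_def using ex_feas by (rule Least_le)

lemma opt_pos: "OPT inst \<ge> 1"
proof -
  have n: "\<not> feasible_packing inst 0 f" for f by (auto simp: feasible_packing_def inst_def)
  have "\<exists>f. feasible_packing inst (OPT inst) f"
    unfolding OPT_def by (rule LeastI_ex) (use ex_feas in blast)
  then have "OPT inst \<noteq> 0" using n by metis
  then show ?thesis by simp
qed

theorem theorem5: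
  shows "RR_BF \<ge> ereal (13 / 10)"
proof -
  have v: "valid_instance inst" by (simp add: valid_instance_def inst_def)
  have E: "expected_BF inst = 13/5"
    unfolding expected_BF_def sum_perm5 by (simp add: inst_def fact_numeral)
  have "13/10 \<le> expected_BF inst / real (OPT inst)"
    using opt_inst opt_pos unfolding E by (simp add: field_simps)
  then have "ereal (13/10) \<le> ereal (expected_BF inst / real (OPT inst))" by simp
  also have "ereal (expected_BF inst / real (OPT inst)) \<le> RR_BF"
    unfolding RR_BF_def using v by (intro SUP_upper) auto
  finally show ?thesis .
qed

end
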